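(* For every epimorphism $E$ in $\mathbf{Lens}$, the get functor $UE$ is an effective epimorphism in $\mathbf{Cat}$ (i.e. $UE$ is a coequaliser of its kernel pair in $\mathbf{Cat}$).
   Context: $\mathbf{Cat}$ is the category of small categories and functors. A lens $F\colon \mathbf{A}\to\mathbf{B}$ between small categories consists of a functor $F\colon\mathbf{A}\to\mathbf{B}$ (the get functor) together with, for each object $A$ of $\mathbf{A}$, a function $\varphi_{F,A}$ from the set of morphisms of $\mathbf{B}$ with domain $FA$ to the set of morphisms of $\mathbf{A}$ with domain $A$, such that: $F(\varphi_{F,A}b)=b$; $\varphi_{F,A}(\mathrm{id}_{FA})=\mathrm{id}_A$; and $\varphi_{F,A}(b'\circ b)=\varphi_{F,A'}(b')\circ\varphi_{F,A}(b)$ whenever $b$ has domain $FA$, $A'$ is the codomain of $\varphi_{F,A}b$, and $b'$ has domain $FA'$. $\mathbf{Lens}$ is the category of small categories and lenses, with composite of $F\colon\mathbf{A}\to\mathbf{B}$, $G\colon\mathbf{B}\to\mathbf{C}$ having get functor $G\circ F$ and puts $\varphi_{G\circ F,A}(c)=\varphi_{F,A}(\varphi_{G,FA}(c))$. $U\colon\mathbf{Lens}\to\mathbf{Cat}$ sends a lens to its get functor. *)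

theory Defs
  imports Main
begin

text \<open>A small category with objects of type 'o and morphisms of type 'm.
  cComp g f denotes the composite "g after f".\<close>

record ('o, 'm) cat =
  Obj  :: "'o set"
  Arr  :: "'m set"
  Dom  :: "'m \<Rightarrow> 'o"
  Cod  :: "'m \<Rightarrow> 'o"
  Idt  :: "'o \<Rightarrow> 'm"
  Comp :: "'m \<Rightarrow> 'm \<Rightarrow> 'm"

definition is_cat :: "('o, 'm) cat \<Rightarrow> bool" where
  "is_cat C \<longleftrightarrow>
     (\<forall>f\<in>Arr C. Dom C f \<in> Obj C \<and> Cod C f \<in> Obj C) \<and>
     (\<forall>x\<in>Obj C. Idt C x \<in> Arr C \<and> Dom C (Idt C x) = x \<and> Cod C (Idt C x) = x) \<and>
     (\<forall>f\<in>Arr C. \<forall>g\<in>Arr C. Cod C f = Dom C g \<longrightarrow>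
        Comp C g f \<in> Arr C \<and> Dom C (Comp C g f) = Dom C f \<and> Cod C (Comp C g f) = Cod C g) \<and>
     (\<forall>f\<in>Arr C. Comp C f (Idt C (Dom C f)) = f \<and> Comp C (Idt C (Cod C f)) f = f) \<and>
     (\<forall>f\<in>Arr C. \<forall>g\<in>Arr C. \<forall>h\<in>Arr C. Cod C f = Dom C g \<longrightarrow> Cod C g = Dom C h \<longrightarrow>
        Comp C h (Comp C g f) = Comp C (Comp C h g) f)"

record ('ao, 'am, 'bo, 'bm) ftor =
  FO :: "'ao \<Rightarrow> 'bo"
  FM :: "'am \<Rightarrow> 'bm"

definition is_functor ::
  "('ao, 'am) cat \<Rightarrow> ('bo, 'bm) cat \<Rightarrow> ('ao, 'am, 'bo, 'bm) ftor \<Rightarrow> bool" where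
  "is_functor A B F \<longleftrightarrow>
     (\<forall>x\<in>Obj A. FO F x \<in> Obj B) \<and>
     (\<forall>f\<in>Arr A. FM F f \<in> Arr B \<and> Dom B (FM F f) = FO F (Dom A f) \<and> Cod B (FM F f) = FO F (Cod A f)) \<and>
     (\<forall>x\<in>Obj A. FM F (Idt A x) = Idt B (FO F x)) \<and>
     (\<forall>f\<in>Arr A. \<forall>g\<in>Arr A. Cod A f = Dom A g \<longrightarrow> FM F (Comp A g f) = Comp B (FM F g) (FM F f))"

definition functor_comp ::
  "('bo, 'bm, 'co, 'cm) ftor \<Rightarrow> ('ao, 'am, 'bo, 'bm) ftor \<Rightarrow> ('ao, 'am, 'co, 'cm) ftor" where
  "functor_comp G F = \<lparr>FO = FO G \<circ> FO F, FM = FM G \<circ> FM F\<rparr>"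

text \<open>Equality of functors with domain A (functions are only relevant on the carriers).\<close>
definition functor_eq :: "('ao, 'am) cat \<Rightarrow> ('ao, 'am, 'bo, 'bm) ftor \<Rightarrow> ('ao, 'am, 'bo, 'bm) ftor \<Rightarrow> bool" where
  "functor_eq A F G \<longleftrightarrow> (\<forall>x\<in>Obj A. FO F x = FO G x) \<and> (\<forall>f\<in>Arr A. FM F f = FM G f)"

record ('ao, 'am, 'bo, 'bm) lens =
  Get :: "('ao, 'am, 'bo, 'bm) ftor"
  Put :: "'ao \<Rightarrow> 'bm \<Rightarrow> 'am"

definition is_lens ::
  "('ao, 'am) cat \<Rightarrow> ('bo, 'bm) cat \<Rightarrow> ('ao, 'am, 'bo, 'bm) lens \<Rightarrow> bool" where
  "is_lens A B L \<longleftrightarrow>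
     is_functor A B (Get L) \<and>
     (\<forall>x\<in>Obj A. \<forall>b\<in>Arr B. Dom B b = FO (Get L) x \<longrightarrow>
        Put L x b \<in> Arr A \<and> Dom A (Put L x b) = x \<and> FM (Get L) (Put L x b) = b) \<and>
     (\<forall>x\<in>Obj A. Put L x (Idt B (FO (Get L) x)) = Idt A x) \<and>
     (\<forall>x\<in>Obj A. \<forall>b\<in>Arr B. \<forall>b'\<in>Arr B. Dom B b = FO (Get L) x \<longrightarrow>
        Dom B b' = FO (Get L) (Cod A (Put L x b)) \<longrightarrow>
        Put L x (Comp B b' b) = Comp A (Put L (Cod A (Put L x b)) b') (Put L x b))"

definition lens_comp ::
  "('bo, 'bm, 'co, 'cm) lens \<Rightarrow> ('ao, 'am, 'bo, 'bm) lens \<Rightarrow> ('ao, 'am, 'co, 'cm) lens" where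
  "lens_comp G F = \<lparr>Get = functor_comp (Get G) (Get F),
                     Put = (\<lambda>x c. Put F x (Put G (FO (Get F) x) c))\<rparr>"

definition lens_eq ::
  "('ao, 'am) cat \<Rightarrow> ('bo, 'bm) cat \<Rightarrow> ('ao, 'am, 'bo, 'bm) lens \<Rightarrow> ('ao, 'am, 'bo, 'bm) lens \<Rightarrow> bool" where
  "lens_eq A B L M \<longleftrightarrow> functor_eq A (Get L) (Get M) \<and>
     (\<forall>x\<in>Obj A. \<forall>b\<in>Arr B. Dom B b = FO (Get L) x \<longrightarrow> Put L x b = Put M x b)"

text \<open>Epimorphism in Lens. Test categories range over small categories whose objects and
  morphisms lie in the (large) universe type ('bo + 'bm + nat) set.\<close>
type_synonym ('bo, 'bm) test_univ = "('bo + 'bm + nat) set"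

definition lens_epi ::
  "('ao, 'am) cat \<Rightarrow> ('bo, 'bm) cat \<Rightarrow> ('ao, 'am, 'bo, 'bm) lens \<Rightarrow> bool" where
  "lens_epi A B E \<longleftrightarrow> is_lens A B E \<and>
     (\<forall>(C :: (('bo, 'bm) test_univ, ('bo, 'bm) test_univ) cat) G H.
        is_cat C \<longrightarrow> is_lens B C G \<longrightarrow> is_lens B C H \<longrightarrow>
        lens_eq A C (lens_comp G E) (lens_comp H E) \<longrightarrow> lens_eq B C G H)"

definition kernel_pair ::
  "('ao, 'am) cat \<Rightarrow> ('ao, 'am, 'bo, 'bm) ftor \<Rightarrow> ('ao \<times> 'ao, 'am \<times> 'am) cat" where
  "kernel_pair A F = \<lparr>
     Obj = {(x, y). x \<in> Obj A \<and> y \<in> Obj A \<and> FO F x = FO F y},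
     Arr = {(f, g). f \<in> Arr A \<and> g \<in> Arr A \<and> FM F f = FM F g},
     Dom = (\<lambda>(f, g). (Dom A f, Dom A g)),
     Cod = (\<lambda>(f, g). (Cod A f, Cod A g)),
     Idt = (\<lambda>(x, y). (Idt A x, Idt A y)),
     Comp = (\<lambda>(f', g') (f, g). (Comp A f' f, Comp A g' g))\<rparr>"

definition kp_proj1 :: "('ao \<times> 'ao, 'am \<times> 'am, 'ao, 'am) ftor" where
  "kp_proj1 = \<lparr>FO = fst, FM = fst\<rparr>"

definition kp_proj2 :: "('ao \<times> 'ao, 'am \<times> 'am, 'ao, 'am) ftor" where
  "kp_proj2 = \<lparr>FO = snd, FM = snd\<rparr>"

definition is_coequaliser ::
  "('ko, 'km) cat \<Rightarrow> ('ao, 'am) cat \<Rightarrow> ('bo, 'bm) cat \<Rightarrow>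
   ('ko, 'km, 'ao, 'am) ftor \<Rightarrow> ('ko, 'km, 'ao, 'am) ftor \<Rightarrow>
   ('ao, 'am, 'bo, 'bm) ftor \<Rightarrow> ('do, 'dm) cat \<Rightarrow> bool" where
  "is_coequaliser K A B P Q F D \<longleftrightarrow>
     is_functor A B F \<and>
     functor_eq K (functor_comp F P) (functor_comp F Q) \<and>
     (\<forall>H :: ('ao, 'am, 'do, 'dm) ftor.
        is_cat D \<longrightarrow> is_functor A D H \<longrightarrow> functor_eq K (functor_comp H P) (functor_comp H Q) \<longrightarrow>
        (\<exists>H'. is_functor B D H' \<and> functor_eq A (functor_comp H' F) H \<and>
           (\<forall>H''. is_functor B D H'' \<longrightarrow> functor_eq A (functor_comp H'' F) H \<longrightarrow>
                  functor_eq B H' H'')))"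

end

theory Submission
  imports Defs
begin

definition eo :: "'bo \<Rightarrow> bool \<Rightarrow> ('bo + 'bm + nat) set" where
  "eo b i = (if i then {Inl b} else {Inl b, Inr (Inr 0)})"
definition em :: "'bm \<Rightarrow> bool \<Rightarrow> ('bo + 'bm + nat) set" where
  "em g i = (if i then {Inr (Inl g)} else {Inr (Inl g), Inr (Inr 0)})"
definition dO :: "('bo + 'bm + nat) set \<Rightarrow> 'bo" where
  "dO s = (THE b. Inl b \<in> s)"
definition dM :: "('bo + 'bm + nat) set \<Rightarrow> 'bm" where
  "dM s = (THE g. Inr (Inl g) \<in> s)"
definition lv :: "('bo + 'bm + nat) set \<Rightarrow> bool" where
  "lv s = (Inr (Inr 0) \<notin> s)"

lemma dO_eo[simp]: "dO (eo b i) = b" unfolding dO_def eo_def by simp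
lemma dM_em[simp]: "dM (em g i) = g" unfolding dM_def em_def by simp
lemma lv_eo[simp]: "lv (eo b i) = i" unfolding lv_def eo_def by simp
lemma lv_em[simp]: "lv (em g i) = i" unfolding lv_def em_def by simp
lemma eo_inj: assumes "eo b i = eo b' i'" shows "b = b'" "i = i'"
proof -
  show "b = b'" "i = i'" using arg_cong[OF assms, of dO] arg_cong[OF assms, of lv] by simp_all
qed
lemma em_inj: assumes "em g i = em g' i'" shows "g = g'" "i = i'"
proof -
  show "g = g'" "i = i'" using arg_cong[OF assms, of dM] arg_cong[OF assms, of lv] by simp_all
qed
lemma eo_eq[simp]: "(eo b i = eo b' i') = (b = b' \<and> i = i')"
proof (rule iffI)
  assume h: "eo b i = eo b' i'" show "b = b' \<and> i = i'" using eo_inj[OF h] by (rule conjI)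
next
  assume "b = b' \<and> i = i'" then show "eo b i = eo b' i'" by simp
qed
lemma em_eq[simp]: "(em g i = em g' i') = (g = g' \<and> i = i')"
proof (rule iffI)
  assume h: "em g i = em g' i'" show "g = g' \<and> i = i'" using em_inj[OF h] by (rule conjI)
next
  assume "g = g' \<and> i = i'" then show "em g i = em g' i'" by simp
qed

definition tcat :: "('bo, 'bm) cat \<Rightarrow> 'bo set \<Rightarrow> (('bo, 'bm) test_univ, ('bo, 'bm) test_univ) cat" where
  "tcat B I = \<lparr>Obj = {eo b i | b i. b \<in> Obj B \<and> (i \<or> b \<notin> I)},
     Arr = {em g i | g i. g \<in> Arr B \<and> (i \<or> Dom B g \<notin> I)},
     Dom = (\<lambda>m. eo (Dom B (dM m)) (lv m)),
     Cod = (\<lambda>m. eo (Cod B (dM m)) (lv m \<or> Cod B (dM m) \<in> I)),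
     Idt = (\<lambda>s. em (Idt B (dO s)) (lv s)),
     Comp = (\<lambda>m' m. em (Comp B (dM m') (dM m)) (lv m))\<rparr>"

lemma tObjE: "x \<in> Obj (tcat B I) \<Longrightarrow> (\<And>b i. x = eo b i \<Longrightarrow> b \<in> Obj B \<Longrightarrow> i \<or> b \<notin> I \<Longrightarrow> P) \<Longrightarrow> P"
  unfolding tcat_def by auto
lemma tArrE: "x \<in> Arr (tcat B I) \<Longrightarrow> (\<And>g i. x = em g i \<Longrightarrow> g \<in> Arr B \<Longrightarrow> i \<or> Dom B g \<notin> I \<Longrightarrow> P) \<Longrightarrow> P"
  unfolding tcat_def by auto
lemma tObj[simp]: "eo b i \<in> Obj (tcat B I) \<longleftrightarrow> b \<in> Obj B \<and> (i \<or> b \<notin> I)"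
  unfolding tcat_def by auto
lemma tArr[simp]: "em g i \<in> Arr (tcat B I) \<longleftrightarrow> g \<in> Arr B \<and> (i \<or> Dom B g \<notin> I)"
  unfolding tcat_def by auto
lemma tDom[simp]: "Dom (tcat B I) (em g i) = eo (Dom B g) i" unfolding tcat_def by simp
lemma tCod[simp]: "Cod (tcat B I) (em g i) = eo (Cod B g) (i \<or> Cod B g \<in> I)" unfolding tcat_def by simp
lemma tIdt[simp]: "Idt (tcat B I) (eo b i) = em (Idt B b) i" unfolding tcat_def by simp
lemma tComp[simp]: "Comp (tcat B I) (em g' i') (em g i) = em (Comp B g' g) i" unfolding tcat_def by simp

lemma catD:
  assumes "is_cat B"
  shows "\<And>f. f \<in> Arr B \<Longrightarrow> Dom B f \<in> Obj B"
    "\<And>f. f \<in> Arr B \<Longrightarrow> Cod B f \<in> Obj B"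
    "\<And>x. x \<in> Obj B \<Longrightarrow> Idt B x \<in> Arr B"
    "\<And>x. x \<in> Obj B \<Longrightarrow> Dom B (Idt B x) = x"
    "\<And>x. x \<in> Obj B \<Longrightarrow> Cod B (Idt B x) = x"
    "\<And>f g. f \<in> Arr B \<Longrightarrow> g \<in> Arr B \<Longrightarrow> Cod B f = Dom B g \<Longrightarrow> Comp B g f \<in> Arr B"
    "\<And>f g. f \<in> Arr B \<Longrightarrow> g \<in> Arr B \<Longrightarrow> Cod B f = Dom B g \<Longrightarrow> Dom B (Comp B g f) = Dom B f"
    "\<And>f g. f \<in> Arr B \<Longrightarrow> g \<in> Arr B \<Longrightarrow> Cod B f = Dom B g \<Longrightarrow> Cod B (Comp B g f) = Cod B g"
    "\<And>f. f \<in> Arr B \<Longrightarrow> Comp B f (Idt B (Dom B f)) = f"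
    "\<And>f. f \<in> Arr B \<Longrightarrow> Comp B (Idt B (Cod B f)) f = f"
    "\<And>f g h. f \<in> Arr B \<Longrightarrow> g \<in> Arr B \<Longrightarrow> h \<in> Arr B \<Longrightarrow> Cod B f = Dom B g \<Longrightarrow> Cod B g = Dom B h \<Longrightarrow>
        Comp B h (Comp B g f) = Comp B (Comp B h g) f"
  using assms unfolding is_cat_def by auto

lemma tcat_cat:
  assumes B: "is_cat B" and up: "\<And>g. g \<in> Arr B \<Longrightarrow> Dom B g \<in> I \<Longrightarrow> Cod B g \<in> I"
  shows "is_cat (tcat B I)"
  unfolding is_cat_def
proof (intro conjI ballI impI)
  fix f assume "f \<in> Arr (tcat B I)"
  then obtain a i where f: "f = em a i" "a \<in> Arr B" "i \<or> Dom B a \<notin> I" by (rule tArrE)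
  show "Dom (tcat B I) f \<in> Obj (tcat B I)" using f by (simp add: catD[OF B])
  show "Cod (tcat B I) f \<in> Obj (tcat B I)" using f by (simp add: catD[OF B])
  show "Comp (tcat B I) f (Idt (tcat B I) (Dom (tcat B I) f)) = f" using f by (simp add: catD[OF B])
  show "Comp (tcat B I) (Idt (tcat B I) (Cod (tcat B I) f)) f = f" using f by (simp add: catD[OF B])
next
  fix x assume "x \<in> Obj (tcat B I)"
  then obtain b i where x: "x = eo b i" "b \<in> Obj B" "i \<or> b \<notin> I" by (rule tObjE)
  show "Idt (tcat B I) x \<in> Arr (tcat B I)" using x by (simp add: catD[OF B])
  show "Dom (tcat B I) (Idt (tcat B I) x) = x" using x by (simp add: catD[OF B])
  show "Cod (tcat B I) (Idt (tcat B I) x) = x" using x by (auto simp add: catD[OF B])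
next
  fix f g assume "f \<in> Arr (tcat B I)" "g \<in> Arr (tcat B I)" and fg: "Cod (tcat B I) f = Dom (tcat B I) g"
  obtain a i where f: "f = em a i" "a \<in> Arr B" "i \<or> Dom B a \<notin> I" using \<open>f \<in> Arr (tcat B I)\<close> by (rule tArrE)
  obtain b j where g: "g = em b j" "b \<in> Arr B" "j \<or> Dom B b \<notin> I" using \<open>g \<in> Arr (tcat B I)\<close> by (rule tArrE)
  have e: "Cod B a = Dom B b" "j = (i \<or> Cod B a \<in> I)" using fg f g by auto
  show "Comp (tcat B I) g f \<in> Arr (tcat B I)" using f g e by (simp add: catD[OF B])
  show "Dom (tcat B I) (Comp (tcat B I) g f) = Dom (tcat B I) f" using f g e by (simp add: catD[OF B])
  show "Cod (tcat B I) (Comp (tcat B I) g f) = Cod (tcat B I) g" using f g e up[of b] by (auto simp add: catD[OF B])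
next
  fix f g h assume "f \<in> Arr (tcat B I)" "g \<in> Arr (tcat B I)" "h \<in> Arr (tcat B I)"
    and fg: "Cod (tcat B I) f = Dom (tcat B I) g" and gh: "Cod (tcat B I) g = Dom (tcat B I) h"
  obtain a i where f: "f = em a i" "a \<in> Arr B" using \<open>f \<in> Arr (tcat B I)\<close> by (rule tArrE)
  obtain b j where g: "g = em b j" "b \<in> Arr B" using \<open>g \<in> Arr (tcat B I)\<close> by (rule tArrE)
  obtain c k where h: "h = em c k" "c \<in> Arr B" using \<open>h \<in> Arr (tcat B I)\<close> by (rule tArrE)
  have e: "Cod B a = Dom B b" "Cod B b = Dom B c" using fg gh f g h by auto
  show "Comp (tcat B I) h (Comp (tcat B I) g f) = Comp (tcat B I) (Comp (tcat B I) h g) f"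
    using f g h e by (simp add: catD[OF B])
qed


definition lG :: "('bo, 'bm) cat \<Rightarrow> ('bo, 'bm, ('bo, 'bm) test_univ, ('bo, 'bm) test_univ) lens" where
  "lG B = \<lparr>Get = \<lparr>FO = (\<lambda>b. eo b True), FM = (\<lambda>g. em g True)\<rparr>, Put = (\<lambda>b m. dM m)\<rparr>"
definition lH :: "('bo, 'bm) cat \<Rightarrow> 'bo set \<Rightarrow> ('bo, 'bm, ('bo, 'bm) test_univ, ('bo, 'bm) test_univ) lens" where
  "lH B I = \<lparr>Get = \<lparr>FO = (\<lambda>b. eo b (b \<in> I)), FM = (\<lambda>g. em g (Dom B g \<in> I))\<rparr>, Put = (\<lambda>b m. dM m)\<rparr>"

lemma lG_simps[simp]: "FO (Get (lG B)) b = eo b True" "FM (Get (lG B)) g = em g True" "Put (lG B) x m = dM m"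
  unfolding lG_def by simp_all
lemma lH_simps[simp]: "FO (Get (lH B I)) b = eo b (b \<in> I)" "FM (Get (lH B I)) g = em g (Dom B g \<in> I)"
  "Put (lH B I) x m = dM m"
  unfolding lH_def by simp_all

lemma lG_lens:
  assumes B: "is_cat B"
  shows "is_lens B (tcat B I) (lG B)"
  unfolding is_lens_def is_functor_def
proof (intro conjI ballI impI)
  fix x m assume x: "x \<in> Obj B" and "m \<in> Arr (tcat B I)" and d: "Dom (tcat B I) m = FO (Get (lG B)) x"
  then obtain a i where m: "m = em a i" "a \<in> Arr B" "i \<or> Dom B a \<notin> I" by (elim tArrE)
  have e: "Dom B a = x" "i" using d m by auto
  show "Put (lG B) x m \<in> Arr B" "Dom B (Put (lG B) x m) = x" "FM (Get (lG B)) (Put (lG B) x m) = m"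
    using m e by auto
next
  fix x b b' assume "x \<in> Obj B" "b \<in> Arr (tcat B I)" "b' \<in> Arr (tcat B I)"
  then show "Put (lG B) x (Comp (tcat B I) b' b) = Comp B (Put (lG B) (Cod B (Put (lG B) x b)) b') (Put (lG B) x b)"
    by (auto elim!: tArrE)
qed (simp_all add: catD[OF B])

lemma lH_lens:
  assumes B: "is_cat B" and up: "\<And>g. g \<in> Arr B \<Longrightarrow> Dom B g \<in> I \<Longrightarrow> Cod B g \<in> I"
  shows "is_lens B (tcat B I) (lH B I)"
  unfolding is_lens_def is_functor_def
proof (intro conjI ballI impI)
  fix x m assume x: "x \<in> Obj B" and "m \<in> Arr (tcat B I)" and d: "Dom (tcat B I) m = FO (Get (lH B I)) x"
  then obtain a i where m: "m = em a i" "a \<in> Arr B" "i \<or> Dom B a \<notin> I" by (elim tArrE)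
  have e: "Dom B a = x" "i = (x \<in> I)" using d m by auto
  show "Put (lH B I) x m \<in> Arr B" "Dom B (Put (lH B I) x m) = x" "FM (Get (lH B I)) (Put (lH B I) x m) = m"
    using m e by auto
next
  fix f assume "f \<in> Arr B"
  then show "Cod (tcat B I) (FM (Get (lH B I)) f) = FO (Get (lH B I)) (Cod B f)"
    using up[of f] by auto
next
  fix x b b' assume "x \<in> Obj B" "b \<in> Arr (tcat B I)" "b' \<in> Arr (tcat B I)"
  then show "Put (lH B I) x (Comp (tcat B I) b' b) = Comp B (Put (lH B I) (Cod B (Put (lH B I) x b)) b') (Put (lH B I) x b)"
    by (auto elim!: tArrE)
qed (simp_all add: catD[OF B])


lemma lensD:
  assumes "is_lens A B E"
  shows "\<And>x. x \<in> Obj A \<Longrightarrow> FO (Get E) x \<in> Obj B"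
    "\<And>f. f \<in> Arr A \<Longrightarrow> FM (Get E) f \<in> Arr B"
    "\<And>f. f \<in> Arr A \<Longrightarrow> Dom B (FM (Get E) f) = FO (Get E) (Dom A f)"
    "\<And>f. f \<in> Arr A \<Longrightarrow> Cod B (FM (Get E) f) = FO (Get E) (Cod A f)"
    "\<And>x. x \<in> Obj A \<Longrightarrow> FM (Get E) (Idt A x) = Idt B (FO (Get E) x)"
    "\<And>f g. f \<in> Arr A \<Longrightarrow> g \<in> Arr A \<Longrightarrow> Cod A f = Dom A g \<Longrightarrow>
       FM (Get E) (Comp A g f) = Comp B (FM (Get E) g) (FM (Get E) f)"
    "\<And>x b. x \<in> Obj A \<Longrightarrow> b \<in> Arr B \<Longrightarrow> Dom B b = FO (Get E) x \<Longrightarrow> Put E x b \<in> Arr A"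
    "\<And>x b. x \<in> Obj A \<Longrightarrow> b \<in> Arr B \<Longrightarrow> Dom B b = FO (Get E) x \<Longrightarrow> Dom A (Put E x b) = x"
    "\<And>x b. x \<in> Obj A \<Longrightarrow> b \<in> Arr B \<Longrightarrow> Dom B b = FO (Get E) x \<Longrightarrow> FM (Get E) (Put E x b) = b"
  using assms unfolding is_lens_def is_functor_def by auto

lemma epi_surj:
  assumes A: "is_cat A" and B: "is_cat B" and ep: "lens_epi A B E" and b: "b \<in> Obj B"
  shows "\<exists>a\<in>Obj A. FO (Get E) a = b"
proof (rule ccontr)
  assume nb: "\<not> (\<exists>a\<in>Obj A. FO (Get E) a = b)"
  define I where "I = FO (Get E) ` Obj A"
  have L: "is_lens A B E" using ep unfolding lens_epi_def by blast
  have up: "Cod B g \<in> I" if g: "g \<in> Arr B" and d: "Dom B g \<in> I" for g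
  proof -
    obtain a where a: "a \<in> Obj A" "Dom B g = FO (Get E) a" using d unfolding I_def by blast
    let ?p = "Put E a g"
    have p: "?p \<in> Arr A" "FM (Get E) ?p = g" using lensD[OF L] a g by auto
    have "Cod B g = FO (Get E) (Cod A ?p)" using lensD(4)[OF L p(1)] p(2) by simp
    moreover have "Cod A ?p \<in> Obj A" using catD(2)[OF A p(1)] .
    ultimately show ?thesis unfolding I_def by blast
  qed
  have C: "is_cat (tcat B I)" by (rule tcat_cat[OF B up])
  have G: "is_lens B (tcat B I) (lG B)" by (rule lG_lens[OF B])
  have H: "is_lens B (tcat B I) (lH B I)" by (rule lH_lens[OF B up])
  have iI: "\<forall>x\<in>Obj A. FO (Get E) x \<in> I" unfolding I_def by blast
  have iD: "\<forall>f\<in>Arr A. Dom B (FM (Get E) f) \<in> I"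
    using lensD(3)[OF L] catD(1)[OF A] unfolding I_def by auto
  have eq: "lens_eq A (tcat B I) (lens_comp (lG B) E) (lens_comp (lH B I) E)"
    unfolding lens_eq_def functor_eq_def lens_comp_def functor_comp_def
    using iI iD by simp
  have "lens_eq B (tcat B I) (lG B) (lH B I)"
    using ep C G H eq unfolding lens_epi_def by blast
  then have "FO (Get (lG B)) b = FO (Get (lH B I)) b" using b unfolding lens_eq_def functor_eq_def by blast
  then have "b \<in> I" by simp
  then show False using nb unfolding I_def by blast
qed

theorem proposition6p2:
  fixes A :: "('ao, 'am) cat" and B :: "('bo, 'bm) cat"
    and E :: "('ao, 'am, 'bo, 'bm) lens"
  assumes "is_cat A" and "is_cat B" and "lens_epi A B E"
  shows "\<forall>D :: ('do, 'dm) cat.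
           is_coequaliser (kernel_pair A (Get E)) A B kp_proj1 kp_proj2 (Get E) D"
proof
  fix D :: "('do, 'dm) cat"
  note A = assms(1) and B = assms(2)
  have L: "is_lens A B E" using assms(3) unfolding lens_epi_def by blast
  note LD = lensD[OF L]
  have surjO: "\<exists>a\<in>Obj A. FO (Get E) a = b" if "b \<in> Obj B" for b
    using epi_surj[OF A B assms(3) that] .
  have surjM: "\<exists>f\<in>Arr A. FM (Get E) f = g" if g: "g \<in> Arr B" for g
  proof -
    obtain a where a: "a \<in> Obj A" "FO (Get E) a = Dom B g" using surjO[OF catD(1)[OF B g]] by blast
    show ?thesis using LD(7,9)[OF a(1) g] a(2) by auto
  qed
  show "is_coequaliser (kernel_pair A (Get E)) A B kp_proj1 kp_proj2 (Get E) D"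
    unfolding is_coequaliser_def
  proof (intro conjI allI impI)
    show "is_functor A B (Get E)" using L unfolding is_lens_def by blast
    show "functor_eq (kernel_pair A (Get E)) (functor_comp (Get E) kp_proj1) (functor_comp (Get E) kp_proj2)"
      unfolding functor_eq_def
    proof (intro conjI ballI)
      fix p assume "p \<in> Obj (kernel_pair A (Get E))"
      then show "FO (functor_comp (Get E) kp_proj1) p = FO (functor_comp (Get E) kp_proj2) p"
        by (cases p) (simp add: kernel_pair_def functor_comp_def kp_proj1_def kp_proj2_def)
    next
      fix p assume "p \<in> Arr (kernel_pair A (Get E))"
      then show "FM (functor_comp (Get E) kp_proj1) p = FM (functor_comp (Get E) kp_proj2) p"
        by (cases p) (simp add: kernel_pair_def functor_comp_def kp_proj1_def kp_proj2_def)
    qed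
  next
    fix H :: "('ao, 'am, 'do, 'dm) ftor"
    assume HF: "is_functor A D H"
      and HK: "functor_eq (kernel_pair A (Get E)) (functor_comp H kp_proj1) (functor_comp H kp_proj2)"
    have kO: "FO H x = FO H y" if "x \<in> Obj A" "y \<in> Obj A" "FO (Get E) x = FO (Get E) y" for x y
    proof -
      have "(x, y) \<in> Obj (kernel_pair A (Get E))" using that by (simp add: kernel_pair_def)
      then have "FO (functor_comp H kp_proj1) (x, y) = FO (functor_comp H kp_proj2) (x, y)"
        using HK unfolding functor_eq_def by blast
      then show ?thesis by (simp add: functor_comp_def kp_proj1_def kp_proj2_def)
    qed
    have kM: "FM H x = FM H y" if "x \<in> Arr A" "y \<in> Arr A" "FM (Get E) x = FM (Get E) y" for x y
    proof -
      have "(x, y) \<in> Arr (kernel_pair A (Get E))" using that by (simp add: kernel_pair_def)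
      then have "FM (functor_comp H kp_proj1) (x, y) = FM (functor_comp H kp_proj2) (x, y)"
        using HK unfolding functor_eq_def by blast
      then show ?thesis by (simp add: functor_comp_def kp_proj1_def kp_proj2_def)
    qed
    have HD: "\<And>x. x \<in> Obj A \<Longrightarrow> FO H x \<in> Obj D"
      "\<And>f. f \<in> Arr A \<Longrightarrow> FM H f \<in> Arr D"
      "\<And>f. f \<in> Arr A \<Longrightarrow> Dom D (FM H f) = FO H (Dom A f)"
      "\<And>f. f \<in> Arr A \<Longrightarrow> Cod D (FM H f) = FO H (Cod A f)"
      "\<And>x. x \<in> Obj A \<Longrightarrow> FM H (Idt A x) = Idt D (FO H x)"
      "\<And>f g. f \<in> Arr A \<Longrightarrow> g \<in> Arr A \<Longrightarrow> Cod A f = Dom A g \<Longrightarrow>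
         FM H (Comp A g f) = Comp D (FM H g) (FM H f)"
      using HF unfolding is_functor_def by auto
    define H' :: "('bo, 'bm, 'do, 'dm) ftor" where
      "H' = \<lparr>FO = (\<lambda>b. FO H (SOME a. a \<in> Obj A \<and> FO (Get E) a = b)),
              FM = (\<lambda>g. FM H (SOME f. f \<in> Arr A \<and> FM (Get E) f = g))\<rparr>"
    have k1: "FO H' (FO (Get E) a) = FO H a" if a: "a \<in> Obj A" for a
    proof -
      let ?s = "SOME a'. a' \<in> Obj A \<and> FO (Get E) a' = FO (Get E) a"
      have "?s \<in> Obj A \<and> FO (Get E) ?s = FO (Get E) a" by (rule someI[of _ a]) (use a in simp)
      then show ?thesis unfolding H'_def using kO[OF _ a] by simp
    qed
    have k2: "FM H' (FM (Get E) f) = FM H f" if f: "f \<in> Arr A" for f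
    proof -
      let ?s = "SOME f'. f' \<in> Arr A \<and> FM (Get E) f' = FM (Get E) f"
      have "?s \<in> Arr A \<and> FM (Get E) ?s = FM (Get E) f" by (rule someI[of _ f]) (use f in simp)
      then show ?thesis unfolding H'_def using kM[OF _ f] by simp
    qed
    have H'F: "is_functor B D H'"
      unfolding is_functor_def
    proof (intro conjI ballI impI)
      fix b assume "b \<in> Obj B"
      then obtain a where a: "a \<in> Obj A" "FO (Get E) a = b" using surjO by blast
      show "FO H' b \<in> Obj D" using k1[OF a(1)] a HD(1) by simp
      have "Idt B b = FM (Get E) (Idt A a)" using LD(5)[OF a(1)] a(2) by simp
      then show "FM H' (Idt B b) = Idt D (FO H' b)"
        using k2[OF catD(3)[OF A a(1)]] k1[OF a(1)] a(2) HD(5)[OF a(1)] by simp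
    next
      fix g assume "g \<in> Arr B"
      then obtain f where f: "f \<in> Arr A" "FM (Get E) f = g" using surjM by blast
      show "FM H' g \<in> Arr D" using k2[OF f(1)] f HD(2) by simp
      show "Dom D (FM H' g) = FO H' (Dom B g)"
        using k2[OF f(1)] f HD(3)[OF f(1)] LD(3)[OF f(1)] k1[OF catD(1)[OF A f(1)]] by simp
      show "Cod D (FM H' g) = FO H' (Cod B g)"
        using k2[OF f(1)] f HD(4)[OF f(1)] LD(4)[OF f(1)] k1[OF catD(2)[OF A f(1)]] by simp
    next
      fix g g' assume g: "g \<in> Arr B" and g': "g' \<in> Arr B" and gg: "Cod B g = Dom B g'"
      obtain a where a: "a \<in> Obj A" "FO (Get E) a = Dom B g" using surjO[OF catD(1)[OF B g]] by blast
      define f where "f = Put E a g"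
      have f: "f \<in> Arr A" "Dom A f = a" "FM (Get E) f = g" unfolding f_def using LD(7-9)[OF a(1) g] a(2) by auto
      have cf: "Cod A f \<in> Obj A" using catD(2)[OF A f(1)] .
      have ecf: "FO (Get E) (Cod A f) = Dom B g'" using LD(4)[OF f(1)] f(3) gg by simp
      define f' where "f' = Put E (Cod A f) g'"
      have f': "f' \<in> Arr A" "Dom A f' = Cod A f" "FM (Get E) f' = g'"
        unfolding f'_def using LD(7-9)[OF cf g'] ecf by auto
      have c: "Comp A f' f \<in> Arr A" using catD(6)[OF A f(1) f'(1)] f'(2) by simp
      have "FM (Get E) (Comp A f' f) = Comp B g' g" using LD(6)[OF f(1) f'(1)] f'(2) f(3) f'(3) by simp
      then have "FM H' (Comp B g' g) = FM H (Comp A f' f)" using k2[OF c] by simp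
      also have "\<dots> = Comp D (FM H f') (FM H f)" using HD(6)[OF f(1) f'(1)] f'(2) by simp
      also have "\<dots> = Comp D (FM H' g') (FM H' g)" using k2[OF f(1)] k2[OF f'(1)] f(3) f'(3) by simp
      finally show "FM H' (Comp B g' g) = Comp D (FM H' g') (FM H' g)" .
    qed
    have H'eq: "functor_eq A (functor_comp H' (Get E)) H"
      unfolding functor_eq_def functor_comp_def using k1 k2 by simp
    show "\<exists>H'. is_functor B D H' \<and> functor_eq A (functor_comp H' (Get E)) H \<and>
           (\<forall>H''. is_functor B D H'' \<longrightarrow> functor_eq A (functor_comp H'' (Get E)) H \<longrightarrow> functor_eq B H' H'')"
    proof (intro exI conjI allI impI)
      show "is_functor B D H'" by (rule H'F)
      show "functor_eq A (functor_comp H' (Get E)) H" by (rule H'eq)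
    next
      fix H'' :: "('bo, 'bm, 'do, 'dm) ftor"
      assume "functor_eq A (functor_comp H'' (Get E)) H"
      then have h1: "\<And>a. a \<in> Obj A \<Longrightarrow> FO H'' (FO (Get E) a) = FO H a"
        and h2: "\<And>f. f \<in> Arr A \<Longrightarrow> FM H'' (FM (Get E) f) = FM H f"
        unfolding functor_eq_def functor_comp_def by simp_all
      show "functor_eq B H' H''"
        unfolding functor_eq_def
      proof (intro conjI ballI)
        fix b assume "b \<in> Obj B"
        then obtain a where a: "a \<in> Obj A" "FO (Get E) a = b" using surjO by blast
        show "FO H' b = FO H'' b" using k1[OF a(1)] h1[OF a(1)] a(2) by simp
      next
        fix g assume "g \<in> Arr B"
        then obtain f where f: "f \<in> Arr A" "FM (Get E) f = g" using surjM by blast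
        show "FM H' g = FM H'' g" using k2[OF f(1)] h2[OF f(1)] f(2) by simp
      qed
    qed
  qed
qed

end
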